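(* Let $\mathrm X$ be the Cantor set (a compact, totally disconnected metric space with no isolated points), let $\mathrm G$ be a countable discrete group, and let $\theta=(\{\mathrm X_t\}_{t\in\mathrm G},\{h_t\}_{t\in\mathrm G})$ be a topological partial action of $\mathrm G$ on $\mathrm X$ such that $\mathrm X_t$ is clopen for every $t\in\mathrm G$. Then the envelope space $\mathrm X^e$ is a locally compact Cantor set: it is Hausdorff, locally compact, has a countable basis consisting of clopen sets, and has no isolated points.
   Context: A (topological) partial action of a group $\mathrm G$ on a topological space $\mathrm X$ is a pair $\theta=(\{\mathrm X_t\}_{t\in\mathrm G},\{h_t\}_{t\in\mathrm G})$ where each $\mathrm X_t$ is an open subset of $\mathrm X$ and each $h_t:\mathrm X_{t^{-1}}\to\mathrm X_t$ is a homeomorphism, such that: (1) $\mathrm X_e=\mathrm X$ and $h_e=\mathrm{id}_{\mathrm X}$; (2) $h_t(\mathrm X_{t^{-1}}\cap\mathrm X_s)=\mathrm X_t\cap\mathrm X_{ts}$ for all $s,t$; (3) $h_t(h_s(x))=h_{ts}(x)$ for all $x\in\mathrm X_{s^{-1}}\cap\mathrm X_{s^{-1}t^{-1}}$. The envelope space $\mathrm X^e$ is the topological quotient of $\mathrm G\times\mathrm X$ ($\mathrm G$ discrete, product topology) by the equivalence relation $(r,x)\sim(s,y)\iff x\in\mathrm X_{r^{-1}s}$ and $h_{s^{-1}r}(x)=y$. *)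

theory Defs
  imports "HOL-Analysis.Analysis" "HOL-Algebra.Group"
begin

definition totally_disconnected_space :: "'a topology \<Rightarrow> bool" where
  "totally_disconnected_space X \<longleftrightarrow>
     (\<forall>S. connectedin X S \<longrightarrow> (\<exists>a. S \<subseteq> {a}))"

definition partial_action ::
  "('g, 'm) monoid_scheme \<Rightarrow> 'a topology \<Rightarrow> ('g \<Rightarrow> 'a set) \<Rightarrow> ('g \<Rightarrow> 'a \<Rightarrow> 'a) \<Rightarrow> bool" where
  "partial_action G X Xd h \<longleftrightarrow>
     (\<forall>t\<in>carrier G. openin X (Xd t)) \<and>
     (\<forall>t\<in>carrier G. homeomorphic_map (subtopology X (Xd (inv\<^bsub>G\<^esub> t))) (subtopology X (Xd t)) (h t)) \<and>
     Xd \<one>\<^bsub>G\<^esub> = topspace X \<and>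
     (\<forall>x\<in>topspace X. h \<one>\<^bsub>G\<^esub> x = x) \<and>
     (\<forall>s\<in>carrier G. \<forall>t\<in>carrier G.
        h t ` (Xd (inv\<^bsub>G\<^esub> t) \<inter> Xd s) = Xd t \<inter> Xd (t \<otimes>\<^bsub>G\<^esub> s)) \<and>
     (\<forall>s\<in>carrier G. \<forall>t\<in>carrier G. \<forall>x.
        x \<in> Xd (inv\<^bsub>G\<^esub> s) \<inter> Xd (inv\<^bsub>G\<^esub> s \<otimes>\<^bsub>G\<^esub> inv\<^bsub>G\<^esub> t) \<longrightarrow>
        h t (h s x) = h (t \<otimes>\<^bsub>G\<^esub> s) x)"

definition envelope_rel ::
  "('g, 'm) monoid_scheme \<Rightarrow> 'a topology \<Rightarrow> ('g \<Rightarrow> 'a set) \<Rightarrow> ('g \<Rightarrow> 'a \<Rightarrow> 'a) \<Rightarrow> (('g \<times> 'a) \<times> ('g \<times> 'a)) set" where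
  "envelope_rel G X Xd h =
     {((r, x), (s, y)). r \<in> carrier G \<and> s \<in> carrier G \<and> x \<in> topspace X \<and> y \<in> topspace X \<and>
        x \<in> Xd (inv\<^bsub>G\<^esub> r \<otimes>\<^bsub>G\<^esub> s) \<and> h (inv\<^bsub>G\<^esub> s \<otimes>\<^bsub>G\<^esub> r) x = y}"

definition envelope_pre_topology ::
  "('g, 'm) monoid_scheme \<Rightarrow> 'a topology \<Rightarrow> ('g \<times> 'a) topology" where
  "envelope_pre_topology G X = prod_topology (discrete_topology (carrier G)) X"

text \<open>The envelope space X^e: the quotient topology of G x X by the relation above.
  Points are equivalence classes; a set of classes is open iff the union of its
  members (= its preimage under the quotient map) is open in G x X.\<close>
definition envelope_topology ::
  "('g, 'm) monoid_scheme \<Rightarrow> 'a topology \<Rightarrow> ('g \<Rightarrow> 'a set) \<Rightarrow> ('g \<Rightarrow> 'a \<Rightarrow> 'a) \<Rightarrow> ('g \<times> 'a) set topology" where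
  "envelope_topology G X Xd h =
     topology (\<lambda>U. U \<subseteq> (carrier G \<times> topspace X) // envelope_rel G X Xd h \<and>
        openin (envelope_pre_topology G X)
          {p \<in> carrier G \<times> topspace X. envelope_rel G X Xd h `` {p} \<in> U})"

end

theory Submission
  imports Defs
begin


lemma (in Metric_space) compact_second_countable:
  assumes "compact_space mtopology"
  shows "second_countable mtopology"
proof -
  have tb: "mtotally_bounded M"
    using assms compactin_imp_mtotally_bounded unfolding compact_space_def by simp
  have "\<forall>n::nat. \<exists>K. finite K \<and> K \<subseteq> M \<and> M \<subseteq> (\<Union>x\<in>K. mball x (1 / Suc n))"
    using tb unfolding mtotally_bounded_def by simp
  then have "\<exists>K. \<forall>n::nat. finite (K n) \<and> K n \<subseteq> M \<and> M \<subseteq> (\<Union>x\<in>K n. mball x (1 / Suc n))"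
    by (rule choice)
  then obtain K where K: "\<And>n. finite (K n) \<and> K n \<subseteq> M \<and> M \<subseteq> (\<Union>x\<in>K n. mball x (1 / Suc n))"
    by blast
  define B where "B = (\<Union>n. (\<lambda>c. mball c (1 / Suc n)) ` K n)"
  have "countable B"
    unfolding B_def using K by (intro countable_UN) (auto intro: countable_finite)
  moreover have "\<forall>V\<in>B. openin mtopology V" unfolding B_def by auto
  moreover have "\<exists>V\<in>B. x \<in> V \<and> V \<subseteq> U" if U: "openin mtopology U" and xU: "x \<in> U" for U x
  proof -
    obtain r where r: "r > 0" "mball x r \<subseteq> U"
      using U xU openin_mtopology by meson
    have xM: "x \<in> M" using U xU openin_mtopology by blast
    obtain n :: nat where n: "inverse (real (Suc n)) < r / 2"
      using reals_Archimedean[of "r/2"] r by auto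
    obtain c where c: "c \<in> K n" "x \<in> mball c (1 / Suc n)"
      using K xM by blast
    have "mball c (1 / Suc n) \<subseteq> mball x r"
    proof (rule mball_subset)
      show "d c x + 1 / real (Suc n) \<le> r" using c n by (simp add: field_simps)
      show "x \<in> M" by fact
    qed
    then show ?thesis using c r unfolding B_def by blast
  qed
  ultimately show ?thesis unfolding second_countable_def by blast
qed

lemma clopen_basis:
  fixes X :: "'a topology"
  assumes "metrizable_space X" "compact_space X" "totally_disconnected_space X"
  obtains BX where "countable BX" "\<forall>C\<in>BX. openin X C \<and> closedin X C"
    "\<And>W x. openin X W \<Longrightarrow> x \<in> W \<Longrightarrow> \<exists>C\<in>BX. x \<in> C \<and> C \<subseteq> W"
proof -
  obtain M d where Md: "Metric_space M d" "X = Metric_space.mtopology M d"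
    using assms(1) unfolding metrizable_space_def by blast
  have "compact_space (Metric_space.mtopology M d)" using assms(2) unfolding Md(2) .
  then have "second_countable (Metric_space.mtopology M d)"
    by (rule Metric_space.compact_second_countable[OF Md(1)])
  then have "second_countable X" using Md(2) by metis
  then obtain \<B> where B1: "countable \<B>" and B2: "\<forall>V \<in> \<B>. openin X V"
    and B3: "\<forall>U x. openin X U \<and> x \<in> U \<longrightarrow> (\<exists>V \<in> \<B>. x \<in> V \<and> V \<subseteq> U)"
    unfolding second_countable_def by auto
  have B: "countable \<B>" "\<forall>V \<in> \<B>. openin X V"
    "\<And>U x. openin X U \<Longrightarrow> x \<in> U \<Longrightarrow> (\<exists>V \<in> \<B>. x \<in> V \<and> V \<subseteq> U)"
    using B1 B2 B3 by auto
  have H: "Hausdorff_space X" by (rule metrizable_imp_Hausdorff_space[OF assms(1)])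
  have LC: "locally_compact_space X" by (rule compact_imp_locally_compact_space[OF assms(2)])
  define BX where "BX = {C \<in> Union ` {F. finite F \<and> F \<subseteq> \<B>}. openin X C \<and> closedin X C}"
  have "BX \<subseteq> Union ` {F. finite F \<and> F \<subseteq> \<B>}" unfolding BX_def by blast
  then have "countable BX"
    by (rule countable_subset[OF _ countable_image[OF countable_Collect_finite_subset[OF B(1)]]])
  moreover have "\<forall>C\<in>BX. openin X C \<and> closedin X C" unfolding BX_def by auto
  moreover have "\<exists>C\<in>BX. x \<in> C \<and> C \<subseteq> W" if W: "openin X W" "x \<in> W" for W x
  proof -
    have xt: "x \<in> topspace X" using W openin_subset by blast
    have cc: "connected_component_of_set X x = {x}"
    proof -
      have "connectedin X (connected_component_of_set X x)"
        by (simp add: connectedin_connected_component_of)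
      then obtain a where "connected_component_of_set X x \<subseteq> {a}"
        using assms(3) unfolding totally_disconnected_space_def by blast
      moreover have "x \<in> connected_component_of_set X x"
        using xt by (simp add: connected_component_of_refl)
      ultimately show ?thesis by blast
    qed
    have "connected_component_of_set X x \<in> connected_components_of X"
      using xt by (simp add: connected_component_in_connected_components_of)
    then have "{x} \<in> connected_components_of X" by (simp only: cc)
    moreover have "compactin X {x}" using xt by simp
    moreover have "{x} \<subseteq> W" using W(2) by simp
    ultimately obtain U V where UV: "openin X U" "openin X V" "disjnt U V" "U \<union> V = topspace X" "{x} \<subseteq> U" "U \<subseteq> W"
      by (rule wilder_locally_compact_component_thm[OF LC H _ _ W(1)])
    have Ucl: "closedin X U"
    proof -
      have "U = topspace X - V" using UV(3,4) unfolding disjnt_def by blast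
      then show ?thesis using UV(2) by (simp add: closedin_diff)
    qed
    have Ucpt: "compactin X U" using Ucl assms(2) closedin_compact_space by blast
    define F0 where "F0 = {V \<in> \<B>. V \<subseteq> U}"
    have "U \<subseteq> \<Union>F0" using B(3)[OF UV(1)] unfolding F0_def by blast
    moreover have "\<forall>V\<in>F0. openin X V" using B(2) unfolding F0_def by blast
    ultimately have "\<exists>F. finite F \<and> F \<subseteq> F0 \<and> U \<subseteq> \<Union>F"
      using conjunct2[OF Ucpt[unfolded compactin_def], rule_format, of F0] by blast
    then obtain F where F: "finite F" "F \<subseteq> F0" "U \<subseteq> \<Union>F"
      by blast
    have UF: "U = \<Union>F" using F unfolding F0_def by blast
    have "F \<in> {F. finite F \<and> F \<subseteq> \<B>}" using F unfolding F0_def by auto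
    then have "\<Union>F \<in> Union ` {F. finite F \<and> F \<subseteq> \<B>}" by (rule imageI)
    then have "U \<in> BX" unfolding BX_def using UF UV(1) Ucl by simp
    then show ?thesis using UV by blast
  qed
  ultimately show ?thesis using that by blast
qed


locale env =
  fixes G :: "('g, 'm) monoid_scheme" (structure) and X :: "'a topology"
    and Xd :: "'g \<Rightarrow> 'a set" and h :: "'g \<Rightarrow> 'a \<Rightarrow> 'a"
  assumes grp: "group G" and pa: "partial_action G X Xd h"
    and clop: "\<forall>t\<in>carrier G. openin X (Xd t) \<and> closedin X (Xd t)"
begin

sublocale group G by (rule grp)

abbreviation "S \<equiv> carrier G \<times> topspace X"
abbreviation "R \<equiv> envelope_rel G X Xd h"
abbreviation "P \<equiv> envelope_pre_topology G X"
abbreviation "E \<equiv> envelope_topology G X Xd h"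

lemma Xd_open: "t \<in> carrier G \<Longrightarrow> openin X (Xd t)" using clop by blast
lemma Xd_closed: "t \<in> carrier G \<Longrightarrow> closedin X (Xd t)" using clop by blast
lemma Xd_sub: "t \<in> carrier G \<Longrightarrow> Xd t \<subseteq> topspace X" using Xd_open openin_subset by blast
lemmas pa' = pa[unfolded partial_action_def]
lemma hom: "t \<in> carrier G \<Longrightarrow> homeomorphic_map (subtopology X (Xd (inv t))) (subtopology X (Xd t)) (h t)"
  using conjunct1[OF conjunct2[OF pa']] by blast
lemma X1: "Xd \<one> = topspace X" using conjunct1[OF conjunct2[OF conjunct2[OF pa']]] .
lemma h1: "x \<in> topspace X \<Longrightarrow> h \<one> x = x" using conjunct1[OF conjunct2[OF conjunct2[OF conjunct2[OF pa']]]] by blast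
lemma P5: "s \<in> carrier G \<Longrightarrow> t \<in> carrier G \<Longrightarrow> h t ` (Xd (inv t) \<inter> Xd s) = Xd t \<inter> Xd (t \<otimes> s)"
  using conjunct1[OF conjunct2[OF conjunct2[OF conjunct2[OF conjunct2[OF pa']]]]] by blast
lemma P6: "s \<in> carrier G \<Longrightarrow> t \<in> carrier G \<Longrightarrow> x \<in> Xd (inv s) \<Longrightarrow> x \<in> Xd (inv s \<otimes> inv t)
   \<Longrightarrow> h t (h s x) = h (t \<otimes> s) x"
  using conjunct2[OF conjunct2[OF conjunct2[OF conjunct2[OF conjunct2[OF pa']]]]] by blast

lemma h_img: "t \<in> carrier G \<Longrightarrow> h t ` Xd (inv t) = Xd t"
proof -
  assume t: "t \<in> carrier G"
  have "h t ` topspace (subtopology X (Xd (inv t))) = topspace (subtopology X (Xd t))"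
    by (rule homeomorphic_imp_surjective_map[OF hom[OF t]])
  then show ?thesis using Xd_sub[OF t] Xd_sub[of "inv t"] t by (simp add: Int_absorb1)
qed

lemma h_in: "t \<in> carrier G \<Longrightarrow> x \<in> Xd (inv t) \<Longrightarrow> h t x \<in> Xd t"
  using h_img by blast

lemma hinv: "a \<in> carrier G \<Longrightarrow> x \<in> Xd (inv a) \<Longrightarrow> h (inv a) (h a x) = x"
proof -
  assume a: "a \<in> carrier G" and x: "x \<in> Xd (inv a)"
  have xt: "x \<in> topspace X" using x Xd_sub[of "inv a"] a by auto
  have "x \<in> Xd (inv a \<otimes> inv (inv a))" using xt a X1 by simp
  then have "h (inv a) (h a x) = h (inv a \<otimes> a) x" using P6[of a "inv a" x] a x by simp
  then show ?thesis using a h1 xt by simp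
qed

lemma cancel1: "s \<in> carrier G \<Longrightarrow> u \<in> carrier G \<Longrightarrow> s \<otimes> (inv s \<otimes> u) = u"
  by (simp add: m_assoc[symmetric])
lemma cancel2: "s \<in> carrier G \<Longrightarrow> u \<in> carrier G \<Longrightarrow> inv s \<otimes> (s \<otimes> u) = u"
  by (simp add: m_assoc[symmetric])

lemma R_iff: "((r, x), (s, y)) \<in> R \<longleftrightarrow> r \<in> carrier G \<and> s \<in> carrier G \<and> x \<in> topspace X \<and> y \<in> topspace X \<and>
        x \<in> Xd (inv r \<otimes> s) \<and> h (inv s \<otimes> r) x = y"
  unfolding envelope_rel_def by simp

lemma R_intro: "r \<in> carrier G \<Longrightarrow> s \<in> carrier G \<Longrightarrow> x \<in> Xd (inv r \<otimes> s) \<Longrightarrow> ((r, x), (s, h (inv s \<otimes> r) x)) \<in> R"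
proof -
  assume r: "r \<in> carrier G" and s: "s \<in> carrier G" and x: "x \<in> Xd (inv r \<otimes> s)"
  have "inv (inv s \<otimes> r) = inv r \<otimes> s" using r s by (simp add: inv_mult_group)
  then have "h (inv s \<otimes> r) x \<in> Xd (inv s \<otimes> r)" using h_in[of "inv s \<otimes> r" x] r s x by simp
  then show ?thesis using R_iff r s x Xd_sub[of "inv r \<otimes> s"] Xd_sub[of "inv s \<otimes> r"] by auto
qed

lemma R_sub: "R \<subseteq> S \<times> S" unfolding envelope_rel_def by auto

lemma R_refl: "p \<in> S \<Longrightarrow> (p, p) \<in> R"
  by (cases p) (auto simp: R_iff X1 h1)

lemma R_sym: "((r, x), (s, y)) \<in> R \<Longrightarrow> ((s, y), (r, x)) \<in> R"
proof -
  assume "((r, x), (s, y)) \<in> R"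
  then have r: "r \<in> carrier G" and s: "s \<in> carrier G" and xt: "x \<in> topspace X" and yt: "y \<in> topspace X"
    and x: "x \<in> Xd (inv r \<otimes> s)" and y: "h (inv s \<otimes> r) x = y" by (auto simp: R_iff)
  define a where "a = inv s \<otimes> r"
  have a: "a \<in> carrier G" "inv a = inv r \<otimes> s" using r s by (auto simp: a_def inv_mult_group)
  have "y \<in> Xd a" using h_in[of a x] a x y a_def by simp
  moreover have "h (inv r \<otimes> s) y = x" using hinv[of a x] a x y a_def by simp
  ultimately show ?thesis using r s xt yt a_def by (auto simp: R_iff)
qed

lemma R_trans: "((r, x), (s, y)) \<in> R \<Longrightarrow> ((s, y), (u, z)) \<in> R \<Longrightarrow> ((r, x), (u, z)) \<in> R"
proof -
  assume "((r, x), (s, y)) \<in> R" "((s, y), (u, z)) \<in> R"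
  then have r: "r \<in> carrier G" and s: "s \<in> carrier G" and u: "u \<in> carrier G"
    and xt: "x \<in> topspace X" and zt: "z \<in> topspace X"
    and x: "x \<in> Xd (inv r \<otimes> s)" and y: "h (inv s \<otimes> r) x = y"
    and y2: "y \<in> Xd (inv s \<otimes> u)" and z: "h (inv u \<otimes> s) y = z" by (auto simp: R_iff)
  define a where "a = inv s \<otimes> r"
  define b where "b = inv u \<otimes> s"
  have a: "a \<in> carrier G" "inv a = inv r \<otimes> s" using r s by (auto simp: a_def inv_mult_group)
  have b: "b \<in> carrier G" "inv b = inv s \<otimes> u" using u s by (auto simp: b_def inv_mult_group)
  have ya: "y \<in> Xd a" using h_in[of a x] a x y a_def by simp
  have P5': "h (inv a) ` (Xd (inv (inv a)) \<inter> Xd (inv b)) = Xd (inv a) \<inter> Xd (inv a \<otimes> inv b)"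
    by (rule P5[OF inv_closed[OF b(1)] inv_closed[OF a(1)]])
  have "inv (inv a) = a" using a(1) by simp
  then have "y \<in> Xd (inv (inv a)) \<inter> Xd (inv b)" using ya y2 b(2) by simp
  then have "h (inv a) y \<in> h (inv a) ` (Xd (inv (inv a)) \<inter> Xd (inv b))" by (rule imageI)
  then have "h (inv a) y \<in> Xd (inv a) \<inter> Xd (inv a \<otimes> inv b)" using P5' by simp
  moreover have "h (inv a) y = x" using hinv[of a x] a x y a_def by simp
  moreover have "inv a \<otimes> inv b = inv r \<otimes> u"
    using a b r s u by (simp add: m_assoc cancel1)
  ultimately have xru: "x \<in> Xd (inv r \<otimes> u)" "x \<in> Xd (inv a \<otimes> inv b)" by auto
  have "h b (h a x) = h (b \<otimes> a) x" using P6[of a b x] a b x xru by simp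
  moreover have "b \<otimes> a = inv u \<otimes> r" using r s u by (simp add: a_def b_def m_assoc cancel1)
  ultimately have "h (inv u \<otimes> r) x = h b (h a x)" by simp
  also have "h a x = y" using y a_def by simp
  also have "h b y = z" using z b_def by simp
  finally have "h (inv u \<otimes> r) x = z" .
  then show ?thesis unfolding R_iff using r u xt zt xru(1) by blast
qed

lemma R_equiv: "equiv S R"
proof (rule equivI)
  show "R \<subseteq> S \<times> S" by (rule R_sub)
  show "refl_on S R" unfolding refl_on_def using R_refl by blast
  show "sym R" unfolding sym_def using R_sym by fast
  show "trans R" unfolding trans_def using R_trans by fast
qed

definition pre where "pre U = {p \<in> S. R``{p} \<in> U}"

lemma istop: "istopology (\<lambda>U. U \<subseteq> S // R \<and> openin P (pre U))"
  unfolding istopology_def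
proof (rule conjI; intro allI impI)
  fix U V assume "U \<subseteq> S // R \<and> openin P (pre U)" "V \<subseteq> S // R \<and> openin P (pre V)"
  moreover have "pre (U \<inter> V) = pre U \<inter> pre V" unfolding pre_def by auto
  ultimately show "U \<inter> V \<subseteq> S // R \<and> openin P (pre (U \<inter> V))" by auto
next
  fix K assume K: "\<forall>U\<in>K. U \<subseteq> S // R \<and> openin P (pre U)"
  have "pre (\<Union>K) = \<Union> (pre ` K)" unfolding pre_def by auto
  moreover have "openin P (\<Union> (pre ` K))" using K by auto
  ultimately show "\<Union>K \<subseteq> S // R \<and> openin P (pre (\<Union>K))" using K by auto
qed

lemma openin_E: "openin E U \<longleftrightarrow> U \<subseteq> S // R \<and> openin P (pre U)"
proof -
  have "openin E = (\<lambda>U. U \<subseteq> S // R \<and> openin P (pre U))"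
    unfolding envelope_topology_def pre_def[abs_def] using istop[unfolded pre_def[abs_def]] by simp
  then show ?thesis by simp
qed

lemma topspace_P: "topspace P = S"
  unfolding envelope_pre_topology_def by simp

lemma topspace_E: "topspace E = S // R"
proof -
  have "pre (S // R) = S" unfolding pre_def by (auto intro: quotientI)
  moreover have "openin P S" using openin_topspace[of P] unfolding topspace_P .
  ultimately have "openin E (S // R)" using openin_E by simp
  then have "S // R \<subseteq> topspace E" by (rule openin_subset)
  moreover have "topspace E \<subseteq> S // R" using openin_E[of "topspace E"] by simp
  ultimately show ?thesis by blast
qed

lemma open_slices:
  assumes "A \<subseteq> S" "\<And>s. s \<in> carrier G \<Longrightarrow> openin X {y. (s, y) \<in> A}"
  shows "openin P A"
proof -
  have "A = (\<Union>s\<in>carrier G. {s} \<times> {y. (s, y) \<in> A})" using assms(1) by auto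
  moreover have op: "openin P ({s} \<times> {y. (s, y) \<in> A})" if "s \<in> carrier G" for s
    unfolding envelope_pre_topology_def using assms(2)[OF that] that
    by (simp add: openin_prod_Times_iff)
  have "openin P (\<Union>s\<in>carrier G. {s} \<times> {y. (s, y) \<in> A})"
    apply (rule openin_Union) using op by blast
  ultimately show ?thesis by simp
qed

lemma slice_open:
  assumes "openin P A" "s \<in> carrier G"
  shows "openin X {y. (s, y) \<in> A}"
proof -
  have "continuous_map X P (\<lambda>y. (s, y))"
    unfolding envelope_pre_topology_def using assms(2) by (simp add: continuous_map_paired)
  then have "openin X {y \<in> topspace X. (s, y) \<in> A}" using openin_continuous_map_preimage[OF _ assms(1)] by blast
  moreover have "{y \<in> topspace X. (s, y) \<in> A} = {y. (s, y) \<in> A}"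
    using openin_subset[OF assms(1)] unfolding topspace_P by blast
  ultimately show ?thesis by metis
qed

definition j where "j g x = R``{(g, x)}"

lemma j_eq_iff: "g \<in> carrier G \<Longrightarrow> x \<in> topspace X \<Longrightarrow> s \<in> carrier G \<Longrightarrow> y \<in> topspace X \<Longrightarrow>
   j g x = j s y \<longleftrightarrow> ((g, x), (s, y)) \<in> R"
  unfolding j_def using eq_equiv_class_iff[OF R_equiv] by simp

lemma j_in: "g \<in> carrier G \<Longrightarrow> x \<in> topspace X \<Longrightarrow> j g x \<in> topspace E"
  unfolding j_def topspace_E by (simp add: quotientI)

lemma E_elem: "z \<in> topspace E \<Longrightarrow> \<exists>g x. g \<in> carrier G \<and> x \<in> topspace X \<and> z = j g x"
  unfolding topspace_E j_def by (auto elim!: quotientE)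

lemma j_inj: "g \<in> carrier G \<Longrightarrow> x \<in> topspace X \<Longrightarrow> y \<in> topspace X \<Longrightarrow> j g x = j g y \<Longrightarrow> x = y"
  using j_eq_iff[of g x g y] by (simp add: R_iff h1)

lemma mem_jimage:
  assumes g: "g \<in> carrier G" and W: "W \<subseteq> topspace X" and s: "s \<in> carrier G" and y: "y \<in> topspace X"
  shows "R``{(s, y)} \<in> j g ` W \<longleftrightarrow> y \<in> h (inv s \<otimes> g) ` (W \<inter> Xd (inv g \<otimes> s))"
proof
  assume "R``{(s, y)} \<in> j g ` W"
  then obtain w where w: "w \<in> W" "j s y = j g w" unfolding j_def by auto
  then have "((g, w), (s, y)) \<in> R" using j_eq_iff[of s y g w] g s y W R_sym by auto
  then show "y \<in> h (inv s \<otimes> g) ` (W \<inter> Xd (inv g \<otimes> s))" using w by (auto simp: R_iff)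
next
  assume "y \<in> h (inv s \<otimes> g) ` (W \<inter> Xd (inv g \<otimes> s))"
  then obtain w where w: "w \<in> W" "w \<in> Xd (inv g \<otimes> s)" "y = h (inv s \<otimes> g) w" by auto
  then have "((g, w), (s, y)) \<in> R" using R_intro[OF g s w(2)] by simp
  then have "j s y = j g w" using j_eq_iff[of s y g w] g s y W w R_sym by auto
  then show "R``{(s, y)} \<in> j g ` W" using w unfolding j_def by auto
qed

lemma j_open:
  assumes g: "g \<in> carrier G" and W: "openin X W"
  shows "openin E (j g ` W)"
proof -
  have Wt: "W \<subseteq> topspace X" using W openin_subset by blast
  have "j g ` W \<subseteq> S // R" using Wt g unfolding j_def by (auto intro: quotientI)
  moreover have "openin P (pre (j g ` W))"
  proof (rule open_slices)
    show "pre (j g ` W) \<subseteq> S" unfolding pre_def by auto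
    fix s assume s: "s \<in> carrier G"
    define a where "a = inv s \<otimes> g"
    have a: "a \<in> carrier G" "inv a = inv g \<otimes> s" using s g by (auto simp: a_def inv_mult_group)
    have "{y. (s, y) \<in> pre (j g ` W)} = h a ` (W \<inter> Xd (inv a))"
      using mem_jimage[OF g Wt s] s a Xd_sub[of a] h_in[of a] unfolding pre_def a_def by auto
    moreover have "openin X (h a ` (W \<inter> Xd (inv a)))"
    proof -
      have "openin (subtopology X (Xd (inv a))) (W \<inter> Xd (inv a))"
        using W by (simp add: openin_subtopology_Int)
      then have "openin (subtopology X (Xd a)) (h a ` (W \<inter> Xd (inv a)))"
        using homeomorphic_map_openness[OF hom[OF a(1)], of "W \<inter> Xd (inv a)"] Wt by auto
      then show ?thesis using openin_trans_full Xd_open a(1) by blast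
    qed
    ultimately show "openin X {y. (s, y) \<in> pre (j g ` W)}" by simp
  qed
  ultimately show ?thesis using openin_E by simp
qed

lemma j_closed:
  assumes g: "g \<in> carrier G" and C: "closedin X C"
  shows "closedin E (j g ` C)"
proof -
  have Ct: "C \<subseteq> topspace X" using C closedin_subset by blast
  have sub: "j g ` C \<subseteq> topspace E" using Ct g j_in by auto
  have "openin E (topspace E - j g ` C)"
    unfolding openin_E
  proof
    show "topspace E - j g ` C \<subseteq> S // R" using topspace_E by auto
    show "openin P (pre (topspace E - j g ` C))"
    proof (rule open_slices)
      show "pre (topspace E - j g ` C) \<subseteq> S" unfolding pre_def by auto
      fix s assume s: "s \<in> carrier G"
      define a where "a = inv s \<otimes> g"
      have a: "a \<in> carrier G" "inv a = inv g \<otimes> s" using s g by (auto simp: a_def inv_mult_group)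
      have "{y. (s, y) \<in> pre (topspace E - j g ` C)} = topspace X - h a ` (C \<inter> Xd (inv a))"
        using mem_jimage[OF g Ct s] s a unfolding pre_def a_def topspace_E by (auto intro: quotientI)
      moreover have "closedin X (h a ` (C \<inter> Xd (inv a)))"
      proof -
        have "closedin (subtopology X (Xd (inv a))) (C \<inter> Xd (inv a))"
          unfolding closedin_subtopology using C by blast
        then have "closedin (subtopology X (Xd a)) (h a ` (C \<inter> Xd (inv a)))"
          using homeomorphic_map_closedness[OF hom[OF a(1)], of "C \<inter> Xd (inv a)"] Ct by auto
        then show ?thesis using closedin_trans_full Xd_closed a(1) by blast
      qed
      ultimately show "openin X {y. (s, y) \<in> pre (topspace E - j g ` C)}" by auto
    qed
  qed
  then show ?thesis using sub closedin_def by blast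
qed

lemma j_cont:
  assumes g: "g \<in> carrier G"
  shows "continuous_map X E (j g)"
  unfolding continuous_map_def
proof (intro conjI allI impI)
  show "j g \<in> topspace X \<rightarrow> topspace E" using j_in g by auto
  fix U assume U: "openin E U"
  then have "openin P (pre U)" using openin_E by simp
  then have "openin X {y. (g, y) \<in> pre U}" using slice_open g by blast
  moreover have "{y. (g, y) \<in> pre U} = {x \<in> topspace X. j g x \<in> U}" unfolding pre_def j_def using g by auto
  ultimately show "openin X {x \<in> topspace X. j g x \<in> U}" by simp
qed

lemma E_hausdorff:
  assumes HX: "Hausdorff_space X"
  shows "Hausdorff_space E"
  unfolding Hausdorff_space_def
proof (intro allI impI)
  fix z1 z2 assume zz: "z1 \<in> topspace E \<and> z2 \<in> topspace E \<and> z1 \<noteq> z2"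
  obtain r x where rx: "r \<in> carrier G" "x \<in> topspace X" "z1 = j r x" using E_elem zz by blast
  obtain s y where sy: "s \<in> carrier G" "y \<in> topspace X" "z2 = j s y" using E_elem zz by blast
  show "\<exists>U V. openin E U \<and> openin E V \<and> z1 \<in> U \<and> z2 \<in> V \<and> disjnt U V"
  proof (cases "x \<in> Xd (inv r \<otimes> s)")
    case True
    define x' where "x' = h (inv s \<otimes> r) x"
    have Rx: "((r, x), (s, x')) \<in> R" unfolding x'_def by (rule R_intro[OF rx(1) sy(1) True])
    then have x't: "x' \<in> topspace X" by (simp add: R_iff)
    have "j r x = j s x'" using j_eq_iff[OF rx(1,2) sy(1) x't] Rx by simp
    then have z1': "z1 = j s x'" using rx by simp
    then have "x' \<noteq> y" using zz sy by auto
    then obtain U V where UV: "openin X U" "openin X V" "x' \<in> U" "y \<in> V" "disjnt U V"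
      using HX x't sy(2) unfolding Hausdorff_space_def by blast
    have Ut: "U \<subseteq> topspace X" and Vt: "V \<subseteq> topspace X" using UV openin_subset by blast+
    have "disjnt (j s ` U) (j s ` V)"
    proof -
      have "a = b" if "a \<in> U" "b \<in> V" "j s a = j s b" for a b
        using j_inj[OF sy(1)] that Ut Vt by blast
      then show ?thesis using UV(5) unfolding disjnt_def by blast
    qed
    moreover have "openin E (j s ` U)" "openin E (j s ` V)" using j_open sy(1) UV by auto
    moreover have "z1 \<in> j s ` U" "z2 \<in> j s ` V" using z1' sy UV by auto
    ultimately show ?thesis by (intro exI[of _ "j s ` U"] exI[of _ "j s ` V"]) simp
  next
    case False
    define U where "U = topspace X - Xd (inv r \<otimes> s)"
    have Uo: "openin X U" unfolding U_def using Xd_closed rx(1) sy(1) by blast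
    have "disjnt (j r ` U) (j s ` topspace X)"
    proof -
      have False if "a \<in> U" "b \<in> topspace X" "j r a = j s b" for a b
      proof -
        have "a \<in> topspace X" using that unfolding U_def by blast
        then have "((r, a), (s, b)) \<in> R" using j_eq_iff[OF rx(1) _ sy(1)] that by blast
        then have "a \<in> Xd (inv r \<otimes> s)" by (simp add: R_iff)
        then show False using that unfolding U_def by blast
      qed
      then show ?thesis unfolding disjnt_def by blast
    qed
    moreover have "openin E (j r ` U)" using j_open rx(1) Uo by auto
    moreover have "openin E (j s ` topspace X)" using j_open sy(1) by auto
    moreover have "z1 \<in> j r ` U" "z2 \<in> j s ` topspace X" using rx sy False unfolding U_def by auto
    ultimately show ?thesis by (intro exI[of _ "j r ` U"] exI[of _ "j s ` topspace X"]) simp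
  qed
qed

lemma E_lc:
  assumes CX: "compact_space X"
  shows "locally_compact_space E"
  unfolding locally_compact_space_def
proof
  fix z assume "z \<in> topspace E"
  then obtain g x where gx: "g \<in> carrier G" "x \<in> topspace X" "z = j g x" using E_elem by blast
  have "openin E (j g ` topspace X)" using j_open gx by auto
  moreover have "compactin E (j g ` topspace X)"
    using image_compactin[OF CX[unfolded compact_space_def] j_cont[OF gx(1)]] .
  moreover have "z \<in> j g ` topspace X" using gx by auto
  ultimately show "\<exists>U K. openin E U \<and> compactin E K \<and> z \<in> U \<and> U \<subseteq> K" by blast
qed

lemma E_noiso:
  assumes NI: "\<forall>x\<in>topspace X. \<not> openin X {x}"
  shows "\<forall>z\<in>topspace E. \<not> openin E {z}"
proof (intro ballI notI)
  fix z assume z: "z \<in> topspace E" and o: "openin E {z}"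
  obtain g x where gx: "g \<in> carrier G" "x \<in> topspace X" "z = j g x" using E_elem z by blast
  have "openin X {y \<in> topspace X. j g y \<in> {z}}"
    by (rule openin_continuous_map_preimage[OF j_cont[OF gx(1)] o])
  moreover have "{y \<in> topspace X. j g y \<in> {z}} = {x}"
    using j_inj[OF gx(1) gx(2)] gx by auto
  ultimately show False using NI gx(2) by simp
qed

lemma E_basis:
  assumes cG: "countable (carrier G)" and cB: "countable BX"
    and clB: "\<forall>C\<in>BX. openin X C \<and> closedin X C"
    and bB: "\<And>W x. openin X W \<Longrightarrow> x \<in> W \<Longrightarrow> \<exists>C\<in>BX. x \<in> C \<and> C \<subseteq> W"
  shows "\<exists>B. countable B \<and> (\<forall>U\<in>B. openin E U \<and> closedin E U) \<and>
              (\<forall>U. openin E U \<longrightarrow> (\<exists>B'\<subseteq>B. \<Union>B' = U))"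
proof (intro exI conjI)
  define B where "B = (\<lambda>(g, C). j g ` C) ` (carrier G \<times> BX)"
  show "countable B" unfolding B_def using cG cB by (intro countable_image countable_SIGMA) auto
  show "\<forall>U\<in>B. openin E U \<and> closedin E U"
    unfolding B_def using clB j_open j_closed by auto
  show "\<forall>U. openin E U \<longrightarrow> (\<exists>B'\<subseteq>B. \<Union>B' = U)"
  proof (intro allI impI)
    fix U assume U: "openin E U"
    have "U \<subseteq> \<Union>{b \<in> B. b \<subseteq> U}"
    proof
      fix z assume zU: "z \<in> U"
      then have "z \<in> topspace E" using openin_subset U by blast
      then obtain g x where gx: "g \<in> carrier G" "x \<in> topspace X" "z = j g x" using E_elem by blast
      have "openin X {y \<in> topspace X. j g y \<in> U}"
        by (rule openin_continuous_map_preimage[OF j_cont[OF gx(1)] U])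
      moreover have "x \<in> {y \<in> topspace X. j g y \<in> U}" using gx zU by simp
      ultimately obtain C where C: "C \<in> BX" "x \<in> C" "C \<subseteq> {y \<in> topspace X. j g y \<in> U}"
        using bB by blast
      have "j g ` C \<in> B" unfolding B_def using gx(1) C(1) by force
      moreover have "j g ` C \<subseteq> U" using C(3) by auto
      moreover have "z \<in> j g ` C" using gx C(2) by simp
      ultimately show "z \<in> \<Union>{b \<in> B. b \<subseteq> U}" by blast
    qed
    then have "\<Union>{b \<in> B. b \<subseteq> U} = U" by blast
    then show "\<exists>B'\<subseteq>B. \<Union>B' = U" by (intro exI[of _ "{b \<in> B. b \<subseteq> U}"]) auto
  qed
qed

end

theorem proposition3p2:
  fixes G :: "('g, 'm) monoid_scheme" and X :: "'a topology"
    and Xd :: "'g \<Rightarrow> 'a set" and h :: "'g \<Rightarrow> 'a \<Rightarrow> 'a"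
  assumes "group G" and "countable (carrier G)"
    and "metrizable_space X" and "compact_space X" and "topspace X \<noteq> {}"
    and "totally_disconnected_space X"
    and "\<forall>x\<in>topspace X. \<not> openin X {x}"
    and "partial_action G X Xd h"
    and "\<forall>t\<in>carrier G. openin X (Xd t) \<and> closedin X (Xd t)"
  shows "Hausdorff_space (envelope_topology G X Xd h) \<and>
         locally_compact_space (envelope_topology G X Xd h) \<and>
         (\<exists>B. countable B \<and>
              (\<forall>U\<in>B. openin (envelope_topology G X Xd h) U \<and> closedin (envelope_topology G X Xd h) U) \<and>
              (\<forall>U. openin (envelope_topology G X Xd h) U \<longrightarrow> (\<exists>B'\<subseteq>B. \<Union>B' = U))) \<and>
         (\<forall>z\<in>topspace (envelope_topology G X Xd h). \<not> openin (envelope_topology G X Xd h) {z})"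
  proof -
  interpret e: env G X Xd h by (rule env.intro) (rule assms)+
  obtain BX where BX: "countable BX" "\<forall>C\<in>BX. openin X C \<and> closedin X C"
    "\<And>W x. openin X W \<Longrightarrow> x \<in> W \<Longrightarrow> \<exists>C\<in>BX. x \<in> C \<and> C \<subseteq> W"
    using clopen_basis[OF assms(3,4,6)] by blast
  have H: "Hausdorff_space (envelope_topology G X Xd h)"
    by (rule e.E_hausdorff[OF metrizable_imp_Hausdorff_space[OF assms(3)]])
  have L: "locally_compact_space (envelope_topology G X Xd h)" by (rule e.E_lc[OF assms(4)])
  have B: "\<exists>B. countable B \<and>
              (\<forall>U\<in>B. openin (envelope_topology G X Xd h) U \<and> closedin (envelope_topology G X Xd h) U) \<and>
              (\<forall>U. openin (envelope_topology G X Xd h) U \<longrightarrow> (\<exists>B'\<subseteq>B. \<Union>B' = U))"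
    by (rule e.E_basis[OF assms(2) BX(1) BX(2) BX(3)])
  have N: "\<forall>z\<in>topspace (envelope_topology G X Xd h). \<not> openin (envelope_topology G X Xd h) {z}"
    by (rule e.E_noiso[OF assms(7)])
  show ?thesis using H L B N by blast
qed

end
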